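(* In the qubit–battery model, write (up to an irrelevant global phase) the target unitary as $V_{00}=\cos\theta$, $V_{01}=\sin\theta\,e^{i\gamma}$, $V_{10}=\sin\theta\,e^{i(\gamma+\varphi)}$, $V_{11}=-\cos\theta\,e^{i\varphi}$ with $\theta\in[0,\pi/2]$, $\gamma,\varphi\in\mathbb R$. Let $U_{SB}=|0\rangle\langle0|_S\otimes|0\rangle\langle0|_B+\sum_{n\ge1}\sum_{i,j}U^{(n)}_{ij}|i\rangle\langle j|_S\otimes|n-i\rangle\langle n-j|_B$ where, for a fixed $\bar\theta\in[0,\pi/2]$ and arbitrary real phases $\alpha_n,\gamma_n,\varphi_n$, $$U^{(n)}_{00}=\cos\bar\theta\,e^{i\alpha_n},\ U^{(n)}_{01}=\sin\bar\theta\,e^{i(\alpha_n+\gamma_n)},\ U^{(n)}_{10}=\sin\bar\theta\,e^{i(\alpha_n+\gamma_n+\varphi_n)},\ U^{(n)}_{11}=-\cos\bar\theta\,e^{i(\alpha_n+\varphi_n)}.$$ Then for every normalized battery state $|\beta\rangle_B=\sum_{n\ge1}\beta_n|n\rangle_B$ with $\beta_0=0$, $$\epsilon_C(\mathbf\Phi_{|\beta\rangle},\mathcal V)\ \ge\ \sin^2(\bar\theta-\theta)+\frac14\Big[\sin(2\bar\theta)\sin(2\theta)\,Q^{(1)}_\beta+\sin^2\bar\theta\,\sin^2\theta\,Q^{(2)}_\beta\Big],$$ where $Q^{(1)}_\beta=2-2\sum_{n\ge1}|\beta_n\beta_{n+1}|$ and $Q^{(2)}_\beta=2\big(1-\sum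_{n\ge1}|\beta_n\beta_{n+2}|\big)$.
   Context: Qubit–battery model: qubit $S$ with energy basis $|0\rangle,|1\rangle$, $H_S=\frac\omega2(|1\rangle\langle1|-|0\rangle\langle0|)$; oscillator $B$ with basis $\{|n\rangle\}_{n\ge0}$, $H_B=\omega\sum_n n|n\rangle\langle n|$. $V_{ij}=\langle i|V_S|j\rangle$, $\mathcal V(\cdot)=V_S\cdot V_S^\dagger$. Channel $\mathbf\Phi_{|\beta\rangle}(\rho)=\mathrm{Tr}_B[U_{SB}(\rho\otimes|\beta\rangle\langle\beta|)U_{SB}^\dagger]$, Kraus operators $K^{(n)}={}_B\langle n|U_{SB}|\beta\rangle_B$, Choi infidelity $\epsilon_C=1-\frac14\sum_n|\mathrm{Tr}[V_S^\dagger K^{(n)}]|^2$. *)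

theory Defs
  imports "HOL-Analysis.Analysis"
begin

(* Qubit basis |0>,|1> encoded as nat indices 0,1; battery basis |n>, n :: nat. *)

definition targetV :: "real \<Rightarrow> real \<Rightarrow> real \<Rightarrow> nat \<Rightarrow> nat \<Rightarrow> complex" where
  "targetV \<theta> \<gamma> \<phi> i j =
     (if i = 0 \<and> j = 0 then complex_of_real (cos \<theta>)
      else if i = 0 \<and> j = 1 then complex_of_real (sin \<theta>) * cis \<gamma>
      else if i = 1 \<and> j = 0 then complex_of_real (sin \<theta>) * cis (\<gamma> + \<phi>)
      else if i = 1 \<and> j = 1 then - complex_of_real (cos \<theta>) * cis \<phi>
      else 0)"

definition blockU :: "real \<Rightarrow> (nat \<Rightarrow> real) \<Rightarrow> (nat \<Rightarrow> real) \<Rightarrow> (nat \<Rightarrow> real)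
    \<Rightarrow> nat \<Rightarrow> nat \<Rightarrow> nat \<Rightarrow> complex" where
  "blockU tb \<alpha> g p n i j =
     (if i = 0 \<and> j = 0 then complex_of_real (cos tb) * cis (\<alpha> n)
      else if i = 0 \<and> j = 1 then complex_of_real (sin tb) * cis (\<alpha> n + g n)
      else if i = 1 \<and> j = 0 then complex_of_real (sin tb) * cis (\<alpha> n + g n + p n)
      else if i = 1 \<and> j = 1 then - complex_of_real (cos tb) * cis (\<alpha> n + p n)
      else 0)"

text \<open>Matrix element <i|_S <n|_B U_SB |j>_S |k>_B of
  U_SB = |0><0| (x) |0><0| + sum_{m>=1} sum_{i,j} U^(m)_ij |i><j| (x) |m-i><m-j|.
  The condition "n = m - i, k = m - j" is written n + i = m, k + j = m.\<close>
definition jointU :: "(nat \<Rightarrow> nat \<Rightarrow> nat \<Rightarrow> complex) \<Rightarrow> nat \<Rightarrow> nat \<Rightarrow> nat \<Rightarrow> nat \<Rightarrow> complex" where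
  "jointU Ublk i n j k =
     (if i = 0 \<and> j = 0 \<and> n = 0 \<and> k = 0 then 1 else 0)
     + (\<Sum>\<^sub>\<infinity>m\<in>{1..}. if n + i = m \<and> k + j = m then Ublk m i j else 0)"

text \<open>Kraus operator K^(n) = <n|_B U_SB |beta>_B, matrix elements K^(n)_ij.\<close>
definition kraus :: "(nat \<Rightarrow> nat \<Rightarrow> nat \<Rightarrow> nat \<Rightarrow> complex) \<Rightarrow> (nat \<Rightarrow> complex)
    \<Rightarrow> nat \<Rightarrow> nat \<Rightarrow> nat \<Rightarrow> complex" where
  "kraus USB \<beta> n i j = (\<Sum>\<^sub>\<infinity>k. USB i n j k * \<beta> k)"

definition tr_adj :: "(nat \<Rightarrow> nat \<Rightarrow> complex) \<Rightarrow> (nat \<Rightarrow> nat \<Rightarrow> complex) \<Rightarrow> complex" where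
  "tr_adj V K = (\<Sum>i\<in>{0,1}. \<Sum>j\<in>{0,1}. cnj (V i j) * K i j)"

definition choi_infid :: "(nat \<Rightarrow> nat \<Rightarrow> complex) \<Rightarrow> (nat \<Rightarrow> nat \<Rightarrow> nat \<Rightarrow> complex) \<Rightarrow> real" where
  "choi_infid V K = 1 - (1/4) * (\<Sum>\<^sub>\<infinity>n. (cmod (tr_adj V (K n)))^2)"

definition Q1 :: "(nat \<Rightarrow> complex) \<Rightarrow> real" where
  "Q1 \<beta> = 2 - 2 * (\<Sum>\<^sub>\<infinity>n\<in>{1..}. cmod (\<beta> n * \<beta> (n+1)))"

definition Q2 :: "(nat \<Rightarrow> complex) \<Rightarrow> real" where
  "Q2 \<beta> = 2 * (1 - (\<Sum>\<^sub>\<infinity>n\<in>{1..}. cmod (\<beta> n * \<beta> (n+2))))"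

end

theory Submission
  imports Defs
begin

lemma jointU_eq:
  "jointU U i n j k = (if i=0 \<and> j=0 \<and> n=0 \<and> k=0 then 1 else 0)
     + (if 1 \<le> n+i \<and> k+j = n+i then U (n+i) i j else 0)"
proof -
  have "(\<Sum>\<^sub>\<infinity>m\<in>{1..}. if n + i = m \<and> k + j = m then U m i j else 0)
        = (\<Sum>\<^sub>\<infinity>m\<in>(if 1 \<le> n+i then {n+i} else {}). if n + i = m \<and> k + j = m then U m i j else 0)"
    by (rule infsum_cong_neutral) (auto split: if_splits)
  also have "\<dots> = (if 1 \<le> n+i \<and> k+j = n+i then U (n+i) i j else 0)"
    by auto
  finally show ?thesis unfolding jointU_def by simp
qed

lemma kraus_eq:
  assumes "\<beta> 0 = 0"
  shows "kraus (jointU U) \<beta> n i j = (if j \<le> n+i then U (n+i) i j * \<beta> (n+i-j) else 0)"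
proof -
  have "kraus (jointU U) \<beta> n i j = (\<Sum>\<^sub>\<infinity>k\<in>{n+i-j}. jointU U i n j k * \<beta> k)"
    unfolding kraus_def
    by (rule infsum_cong_neutral) (auto simp: jointU_eq assms)
  also have "\<dots> = jointU U i n j (n+i-j) * \<beta> (n+i-j)" by simp
  also have "\<dots> = (if j \<le> n+i then U (n+i) i j * \<beta> (n+i-j) else 0)"
    using assms by (auto simp: jointU_eq)
  finally show ?thesis .
qed

lemma T_bound:
  fixes \<theta> \<gamma> \<phi> tb :: real and \<beta> :: "nat \<Rightarrow> complex"
  assumes "0 \<le> \<theta>" "\<theta> \<le> pi/2" "0 \<le> tb" "tb \<le> pi/2" "\<beta> 0 = 0"
  shows "cmod (tr_adj (targetV \<theta> \<gamma> \<phi>) (kraus (jointU (blockU tb \<alpha> g p)) \<beta> n))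
     \<le> 2 * cos \<theta> * cos tb * cmod (\<beta> n) + sin \<theta> * sin tb * (cmod (\<beta> (n-1)) + cmod (\<beta> (n+1)))"
proof -
  have c: "cos \<theta> \<ge> 0" "cos tb \<ge> 0" using assms by (auto intro!: cos_ge_zero)
  have s: "sin \<theta> \<ge> 0" "sin tb \<ge> 0" using assms by (auto intro!: sin_ge_zero)
  let ?K = "kraus (jointU (blockU tb \<alpha> g p)) \<beta> n"
  let ?V = "targetV \<theta> \<gamma> \<phi>"
  have T: "tr_adj ?V ?K = cnj (?V 0 0) * ?K 0 0 + cnj (?V 0 1) * ?K 0 1 + (cnj (?V 1 0) * ?K 1 0 + cnj (?V 1 1) * ?K 1 1)"
    unfolding tr_adj_def by simp
  have n1: "cmod (cnj (?V 0 0) * ?K 0 0) = cos \<theta> * cos tb * cmod (\<beta> n)"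
    using c by (simp add: kraus_eq assms targetV_def blockU_def norm_mult)
  have n2: "cmod (cnj (?V 0 1) * ?K 0 1) \<le> sin \<theta> * sin tb * cmod (\<beta> (n-1))"
    using s by (simp add: kraus_eq assms targetV_def blockU_def norm_mult)
  have n3: "cmod (cnj (?V 1 0) * ?K 1 0) = sin \<theta> * sin tb * cmod (\<beta> (n+1))"
    using s by (simp add: kraus_eq assms targetV_def blockU_def norm_mult)
  have n4: "cmod (cnj (?V 1 1) * ?K 1 1) = cos \<theta> * cos tb * cmod (\<beta> n)"
    using c by (simp add: kraus_eq assms targetV_def blockU_def norm_mult)
  have "cmod (tr_adj ?V ?K) \<le> cmod (cnj (?V 0 0) * ?K 0 0) + cmod (cnj (?V 0 1) * ?K 0 1) + (cmod (cnj (?V 1 0) * ?K 1 0) + cmod (cnj (?V 1 1) * ?K 1 1))"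
    unfolding T by (meson add_mono norm_triangle_ineq order_trans)
  then show ?thesis using n1 n2 n3 n4 by (simp add: algebra_simps)
qed

lemma prod_summable:
  fixes y :: "nat \<Rightarrow> real"
  assumes "summable (\<lambda>n. (y n)^2)" "\<And>n. y n \<ge> 0"
  shows "summable (\<lambda>n. y n * y (n+k))"
proof (rule summable_comparison_test)
  have "summable (\<lambda>n. (y (n+k))^2)" using assms(1) by (rule summable_ignore_initial_segment)
  then show "summable (\<lambda>n. ((y n)^2 + (y (n+k))^2)/2)"
    using assms(1) by (intro summable_divide summable_add)
  show "\<exists>N. \<forall>n\<ge>N. norm (y n * y (n+k)) \<le> ((y n)^2 + (y (n+k))^2)/2"
  proof (intro exI allI impI)
    fix n :: nat
    have "2 * (y n * y (n+k)) \<le> (y n)^2 + (y (n+k))^2"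
      using sum_squares_bound[of "y n" "y (n+k)"] by (simp add: mult.assoc)
    then show "norm (y n * y (n+k)) \<le> ((y n)^2 + (y (n+k))^2)/2"
      using assms(2)[of n] assms(2)[of "n+k"] by simp
  qed
qed

lemma alg0:
  fixes cc ss C S P1 P2 :: real
  assumes "ss^2 + cc^2 = 1" "S^2 + C^2 = 1"
  shows "1 - (1/4) * ((2 * cc * C)^2 + 4 * (2 * cc * C) * (ss * S) * P1
           + (ss * S)^2 * (2 + 2 * P2))
       = (S * cc - C * ss)^2 + (1/4) * ((2 * S * C) * (2 * ss * cc) * (2 - 2 * P1)
              + S^2 * ss^2 * (2 * (1 - P2)))"
  using assms by algebra

lemma final_alg:
  fixes \<theta> tb P1 P2 :: real
  shows "1 - (1/4) * ((2 * cos \<theta> * cos tb)^2 + 4 * (2 * cos \<theta> * cos tb) * (sin \<theta> * sin tb) * P1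
           + (sin \<theta> * sin tb)^2 * (2 + 2 * P2))
       = (sin (tb - \<theta>))^2 + (1/4) * (sin (2*tb) * sin (2*\<theta>) * (2 - 2 * P1)
              + (sin tb)^2 * (sin \<theta>)^2 * (2 * (1 - P2)))"
  unfolding sin_diff sin_double
  by (rule alg0) simp_all

theorem mainTheorem4:
  fixes \<theta> \<gamma> \<phi> tb :: real
    and \<alpha> g p :: "nat \<Rightarrow> real"
    and \<beta> :: "nat \<Rightarrow> complex"
  assumes "0 \<le> \<theta>" "\<theta> \<le> pi/2"
    and "0 \<le> tb" "tb \<le> pi/2"
    and "((\<lambda>n. (cmod (\<beta> n))^2) has_sum 1) UNIV"
    and "\<beta> 0 = 0"
  shows "choi_infid (targetV \<theta> \<gamma> \<phi>) (kraus (jointU (blockU tb \<alpha> g p)) \<beta>)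
         \<ge> (sin (tb - \<theta>))^2 + (1/4) * (sin (2*tb) * sin (2*\<theta>) * Q1 \<beta>
              + (sin tb)^2 * (sin \<theta>)^2 * Q2 \<beta>)"
proof -
  define y where "y n = cmod (\<beta> n)" for n
  define a where "a = 2 * cos \<theta> * cos tb"
  define b where "b = sin \<theta> * sin tb"
  define T where "T n = (cmod (tr_adj (targetV \<theta> \<gamma> \<phi>) (kraus (jointU (blockU tb \<alpha> g p)) \<beta> n)))^2" for n
  have y0: "y 0 = 0" using assms(6) by (simp add: y_def)
  have ynn: "y n \<ge> 0" for n by (simp add: y_def)
  have ab: "a \<ge> 0" "b \<ge> 0" using assms(1-4)
    by (auto simp: a_def b_def intro!: cos_ge_zero sin_ge_zero mult_nonneg_nonneg)
  have Y0: "(\<lambda>n. (y n)^2) sums 1" using has_sum_imp_sums[OF assms(5)] by (simp add: y_def)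
  have Ys: "summable (\<lambda>n. (y n)^2)" using Y0 by (simp add: sums_iff)
  have Y1: "(\<lambda>n. (y (n+1))^2) sums 1" using Y0 sums_Suc_iff[of "\<lambda>n. (y n)^2"] y0 by simp
  have Ym: "(\<lambda>n. (y (n-1))^2) sums 1" using Y0 sums_Suc_iff[of "\<lambda>n. (y (n-1))^2"] y0 by simp
  define P1 where "P1 = suminf (\<lambda>n. y n * y (n+1))"
  define P2 where "P2 = suminf (\<lambda>n. y n * y (n+2))"
  have S1: "(\<lambda>n. y n * y (n+1)) sums P1" unfolding P1_def
    using prod_summable[OF Ys ynn, of 1] by (simp add: summable_sums)
  have S2: "(\<lambda>n. y n * y (n+2)) sums P2" unfolding P2_def
    using prod_summable[OF Ys ynn, of 2] by (simp add: summable_sums)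
  have S1m: "(\<lambda>n. y (n-1) * y n) sums P1"
    using S1 sums_Suc_iff[of "\<lambda>n. y (n-1) * y n"] y0 by simp
  have S2m: "(\<lambda>n. y (n-1) * y (n+1)) sums P2"
    using S2 sums_Suc_iff[of "\<lambda>n. y (n-1) * y (n+1)"] y0 by (simp add: numeral_2_eq_2)
  define f where "f n = (a * y n + b * (y (n-1) + y (n+1)))^2" for n
  have feq: "f n = a^2 * (y n)^2 + (2*a*b) * (y (n-1) * y n + y n * y (n+1))
     + b^2 * ((y (n-1))^2 + (y (n+1))^2 + 2 * (y (n-1) * y (n+1)))" for n
    unfolding f_def by (simp add: power2_eq_square algebra_simps)
  have fs: "f sums (a^2 * 1 + (2*a*b) * (P1 + P1) + b^2 * (1 + 1 + 2 * P2))"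
    unfolding feq
    by (intro sums_add sums_mult sums_mult2 Y0 Y1 Ym S1 S1m S2m)
  have Tle: "T n \<le> f n" for n
  proof -
    have "cmod (tr_adj (targetV \<theta> \<gamma> \<phi>) (kraus (jointU (blockU tb \<alpha> g p)) \<beta> n))
       \<le> a * y n + b * (y (n-1) + y (n+1))"
      using T_bound[of \<theta> tb \<beta> \<gamma> \<phi> \<alpha> g p n] assms(1-4,6) by (simp add: a_def b_def y_def)
    then show ?thesis unfolding T_def f_def by (intro power_mono) auto
  qed
  have Tnn: "T n \<ge> 0" for n by (simp add: T_def)
  have Tsum: "summable T"
    by (rule summable_comparison_test[of T f]) (use Tle Tnn fs in \<open>auto simp: sums_iff\<close>)
  have "suminf T \<le> suminf f" using Tle Tsum fs by (intro suminf_le) (auto simp: sums_iff)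
  also have "suminf f = a^2 + 4*a*b*P1 + b^2 * (2 + 2 * P2)" using fs by (simp add: sums_iff algebra_simps)
  finally have Tb: "suminf T \<le> a^2 + 4*a*b*P1 + b^2 * (2 + 2 * P2)" .
  have "(T has_sum suminf T) UNIV" using Tsum Tnn by (intro sums_nonneg_imp_has_sum) (auto simp: summable_sums)
  then have iT: "(\<Sum>\<^sub>\<infinity>n. T n) = suminf T" by (rule infsumI)
  have Q1e: "Q1 \<beta> = 2 - 2 * P1"
  proof -
    have "(\<Sum>\<^sub>\<infinity>n\<in>{1..}. cmod (\<beta> n * \<beta> (n+1))) = (\<Sum>\<^sub>\<infinity>n. y n * y (n+1))"
      by (rule infsum_cong_neutral) (auto simp: y_def norm_mult assms(6) not_less_eq_eq)
    also have "\<dots> = P1" using S1 ynn by (intro infsumI sums_nonneg_imp_has_sum) auto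
    finally show ?thesis unfolding Q1_def by simp
  qed
  have Q2e: "Q2 \<beta> = 2 * (1 - P2)"
  proof -
    have "(\<Sum>\<^sub>\<infinity>n\<in>{1..}. cmod (\<beta> n * \<beta> (n+2))) = (\<Sum>\<^sub>\<infinity>n. y n * y (n+2))"
      by (rule infsum_cong_neutral) (auto simp: y_def norm_mult assms(6) not_less_eq_eq)
    also have "\<dots> = P2" using S2 ynn by (intro infsumI sums_nonneg_imp_has_sum) auto
    finally show ?thesis unfolding Q2_def by simp
  qed
  have "choi_infid (targetV \<theta> \<gamma> \<phi>) (kraus (jointU (blockU tb \<alpha> g p)) \<beta>) = 1 - (1/4) * suminf T"
    unfolding choi_infid_def iT[symmetric] T_def ..
  also have "\<dots> \<ge> 1 - (1/4) * (a^2 + 4*a*b*P1 + b^2 * (2 + 2 * P2))" using Tb by simp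
  finally show ?thesis
    using final_alg[of \<theta> tb P1 P2] unfolding Q1e Q2e a_def b_def by simp
qed

end
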